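(* Let $P$ be a finite poset and let $\varphi: P\to P$ be a map such that $\varphi\circ\varphi=\mathrm{id}_P$ and, for all $x,y\in P$, $x\le y \iff \varphi(x)\le\varphi(y)$. (i) If $\varphi$ has no fixed points, then $P$ is a $\forall$-game. (ii) If the set of fixed points of $\varphi$ is nonempty and has a minimum element (a fixed point $z$ with $z\le w$ for every fixed point $w$), then $P$ is an $\exists$-game.
   Context: A finite poset $P$ defines a poset game: two players alternate moves; a move consists of choosing a point $x$ of the current poset $Q$ and replacing $Q$ by $Q_x:=\{y\in Q: x\not\le y\}$ (i.e., removing $x$ and every point above it); the first player unable to move (because the poset is empty) loses. $P$ is an $\exists$-game if the player who moves first has a winning strategy, and a $\forall$-game otherwise (i.e., the second player has a winning strategy). *)

theory Defs
  imports Main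
begin

definition move :: "('a \<Rightarrow> 'a \<Rightarrow> bool) \<Rightarrow> 'a set \<Rightarrow> 'a \<Rightarrow> 'a set" where
  "move le Q x = {y \<in> Q. \<not> le x y}"

inductive win :: "('a \<Rightarrow> 'a \<Rightarrow> bool) \<Rightarrow> 'a set \<Rightarrow> bool"
  and lose :: "('a \<Rightarrow> 'a \<Rightarrow> bool) \<Rightarrow> 'a set \<Rightarrow> bool"
  for le :: "'a \<Rightarrow> 'a \<Rightarrow> bool" where
  winI: "x \<in> Q \<Longrightarrow> lose le (move le Q x) \<Longrightarrow> win le Q"
| loseI: "(\<forall>x\<in>Q. win le (move le Q x)) \<Longrightarrow> lose le Q"

definition exists_game :: "'a set \<Rightarrow> ('a \<Rightarrow> 'a \<Rightarrow> bool) \<Rightarrow> bool" where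
  "exists_game P le = win le P"

definition forall_game :: "'a set \<Rightarrow> ('a \<Rightarrow> 'a \<Rightarrow> bool) \<Rightarrow> bool" where
  "forall_game P le = lose le P"

definition finite_poset :: "'a set \<Rightarrow> ('a \<Rightarrow> 'a \<Rightarrow> bool) \<Rightarrow> bool" where
  "finite_poset P le \<longleftrightarrow> finite P
     \<and> (\<forall>x\<in>P. le x x)
     \<and> (\<forall>x\<in>P. \<forall>y\<in>P. le x y \<and> le y x \<longrightarrow> x = y)
     \<and> (\<forall>x\<in>P. \<forall>y\<in>P. \<forall>z\<in>P. le x y \<and> le y z \<longrightarrow> le x z)"

end

theory Submission
  imports Defs
begin

lemma mirror_lose:
  assumes fp: "finite_poset P le"
    and inv: "\<forall>x\<in>P. \<phi> (\<phi> x) = x"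
    and iso: "\<forall>x\<in>P. \<forall>y\<in>P. le x y \<longleftrightarrow> le (\<phi> x) (\<phi> y)"
  shows "Q \<subseteq> P \<Longrightarrow> (\<forall>y\<in>Q. \<phi> y \<in> Q \<and> \<phi> y \<noteq> y) \<Longrightarrow> lose le Q"
proof (induction "card Q" arbitrary: Q rule: less_induct)
  case less
  have finQ: "finite Q" using less.prems fp finite_subset unfolding finite_poset_def by blast
  show ?case
  proof (rule loseI, intro ballI)
    fix x assume xQ: "x \<in> Q"
    have xP: "x \<in> P" using xQ less.prems by blast
    have fxQ: "\<phi> x \<in> Q" and fxne: "\<phi> x \<noteq> x" using xQ less.prems by auto
    have fxP: "\<phi> x \<in> P" using fxQ less.prems by blast
    have nle: "\<not> le x (\<phi> x)"
    proof
      assume h: "le x (\<phi> x)"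
      then have "le (\<phi> x) (\<phi> (\<phi> x))" using iso xP fxP by blast
      then have "le (\<phi> x) x" using inv xP by simp
      then show False using h fp xP fxP fxne unfolding finite_poset_def by blast
    qed
    let ?Q' = "move le Q x"
    have fxQ': "\<phi> x \<in> ?Q'" using fxQ nle unfolding move_def by blast
    let ?R = "move le ?Q' (\<phi> x)"
    have Rsub: "?R \<subseteq> P" using less.prems unfolding move_def by blast
    have Rinv: "\<forall>y\<in>?R. \<phi> y \<in> ?R \<and> \<phi> y \<noteq> y"
    proof
      fix y assume yR: "y \<in> ?R"
      then have yQ: "y \<in> Q" and n1: "\<not> le x y" and n2: "\<not> le (\<phi> x) y"
        unfolding move_def by auto
      have yP: "y \<in> P" using yQ less.prems by blast
      have fyQ: "\<phi> y \<in> Q" and fyne: "\<phi> y \<noteq> y" using yQ less.prems by auto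
      have fyP: "\<phi> y \<in> P" using fyQ less.prems by blast
      have "le x (\<phi> y) \<longleftrightarrow> le (\<phi> x) (\<phi> (\<phi> y))" using iso xP fyP by blast
      then have "\<not> le x (\<phi> y)" using n2 inv yP by simp
      moreover have "\<not> le (\<phi> x) (\<phi> y)" using n1 iso xP yP by blast
      ultimately show "\<phi> y \<in> ?R \<and> \<phi> y \<noteq> y" using fyQ fyne unfolding move_def by auto
    qed
    have "x \<notin> ?R" using fp xP unfolding move_def finite_poset_def by auto
    moreover have "?R \<subseteq> Q" unfolding move_def by auto
    ultimately have "?R \<subset> Q" using xQ by blast
    then have "card ?R < card Q" using finQ by (rule psubset_card_mono[rotated])
    then show "win le ?Q'" using winI[OF fxQ' less.hyps[OF _ Rsub Rinv]] by blast
  qed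
qed

theorem mainTheorem1:
  fixes P :: "'a set" and le :: "'a \<Rightarrow> 'a \<Rightarrow> bool" and \<phi> :: "'a \<Rightarrow> 'a"
  assumes "finite_poset P le"
    and "\<phi> ` P \<subseteq> P"
    and "\<forall>x\<in>P. \<phi> (\<phi> x) = x"
    and "\<forall>x\<in>P. \<forall>y\<in>P. le x y \<longleftrightarrow> le (\<phi> x) (\<phi> y)"
  shows "((\<forall>x\<in>P. \<phi> x \<noteq> x) \<longrightarrow> forall_game P le)
       \<and> ((\<exists>z\<in>P. \<phi> z = z \<and> (\<forall>w\<in>P. \<phi> w = w \<longrightarrow> le z w)) \<longrightarrow> exists_game P le)"
proof (intro conjI impI)
  assume "\<forall>x\<in>P. \<phi> x \<noteq> x"
  then show "forall_game P le" unfolding forall_game_def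
    using mirror_lose[OF assms(1,3,4), of P] assms(2) by auto
next
  assume "\<exists>z\<in>P. \<phi> z = z \<and> (\<forall>w\<in>P. \<phi> w = w \<longrightarrow> le z w)"
  then obtain z where zP: "z \<in> P" and fz: "\<phi> z = z" and zmin: "\<forall>w\<in>P. \<phi> w = w \<longrightarrow> le z w" by blast
  let ?Q = "move le P z"
  have sub: "?Q \<subseteq> P" unfolding move_def by auto
  have "\<forall>y\<in>?Q. \<phi> y \<in> ?Q \<and> \<phi> y \<noteq> y"
  proof
    fix y assume "y \<in> ?Q"
    then have yP: "y \<in> P" and n: "\<not> le z y" unfolding move_def by auto
    have fyP: "\<phi> y \<in> P" using yP assms(2) by blast
    have "le z (\<phi> y) \<longleftrightarrow> le (\<phi> z) (\<phi> (\<phi> y))" using assms(4) zP fyP by blast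
    then have "\<not> le z (\<phi> y)" using n assms(3) yP fz by simp
    moreover have "\<phi> y \<noteq> y" using zmin yP n by blast
    ultimately show "\<phi> y \<in> ?Q \<and> \<phi> y \<noteq> y" using fyP unfolding move_def by auto
  qed
  then have "lose le ?Q" using mirror_lose[OF assms(1,3,4) sub] by blast
  then show "exists_game P le" unfolding exists_game_def using winI[OF zP] by blast
qed

end
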